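(* Let $H$ be a Hilbert space with orthonormal system $\{e_m\}_{m\ge1}$. For $n\in\mathbb N$ let $k_n:=[\sqrt n]$ and let $g_p(n)$, $p=1,\dots,2^{k_n}$, be the vertices of the unit cube in $\operatorname{span}\{e_{2(n+1)},\dots,e_{2(n+k_n)}\}$, i.e. all vectors $\sum_{j=1}^{k_n}a_je_{2(n+j)}$ with $a_j\in\{0,1\}$. Let $\gamma>0$ and let $(\varepsilon_n)$ be positive numbers with $ce^{-\gamma n^2}\le\varepsilon_n\le Ce^{-\gamma n^2}$ for some constants $0<c\le C$. Let $\mathcal B\subset H$ be a compact set such that $\varepsilon_ng_p(n)\in\mathcal B$ for all $n\ge n_0$ (some $n_0$) and all $p=1,\dots,2^{k_n}$. Then the log-doubling factor of $\mathcal B$ is infinite, i.e. $\dim_{Log-D}(\mathcal B)=\infty$.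
   Context: For a compact metric space $X$ and $B\subset X$, $N_\varepsilon(B,X)$ is the minimal number of $\varepsilon$-balls of $X$ covering $B$; $D_\varepsilon(X):=\sup_{x\in X}N_{\varepsilon/2}(B(\varepsilon,x),X)$ where $B(r,x)$ is the ball of radius $r$ in $X$ centered at $x$; and $\dim_{Log-D}(X):=\limsup_{\varepsilon\to0}\frac{\log D_\varepsilon(X)}{\log\log(1/\varepsilon)}$. *)

theory Defs
  imports "HOL-Analysis.Analysis"
begin

text \<open>N_eps(B,X): minimal number of eps-balls of X (centres in X, open balls taken in X)
  covering B; infinity if no finite cover exists.\<close>
definition cov_num :: "real \<Rightarrow> 'a::metric_space set \<Rightarrow> 'a set \<Rightarrow> ereal" where
  "cov_num \<epsilon> B X = Inf {ereal (real (card C)) | C. finite C \<and> C \<subseteq> X \<and>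
       B \<subseteq> (\<Union>c\<in>C. ball c \<epsilon> \<inter> X)}"

definition doubling_D :: "real \<Rightarrow> 'a::metric_space set \<Rightarrow> ereal" where
  "doubling_D \<epsilon> X = (SUP x\<in>X. cov_num (\<epsilon>/2) (ball x \<epsilon> \<inter> X) X)"

text \<open>Log-doubling dimension: limsup as eps -> 0+ of log D_eps(X) / log log (1/eps).
  For compact X, D_eps(X) is finite, so the real logarithm is applied to its real value.\<close>
definition dim_LogD :: "'a::metric_space set \<Rightarrow> ereal" where
  "dim_LogD X = Limsup (at_right 0)
     (\<lambda>\<epsilon>. ereal (ln (real_of_ereal (doubling_D \<epsilon> X)) / ln (ln (1 / \<epsilon>))))"

definition kn :: "nat \<Rightarrow> nat" where
  "kn n = nat \<lfloor>sqrt (real n)\<rfloor>"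

definition cube_vertices :: "(nat \<Rightarrow> 'a::real_vector) \<Rightarrow> nat \<Rightarrow> 'a set" where
  "cube_vertices e n = {(\<Sum>j=1..kn n. a j *\<^sub>R e (2 * (n + j))) | a. \<forall>j. a j \<in> {0, 1}}"

end

theory Submission
  imports Defs
begin

lemma norm_sum_orth:
  fixes u :: "nat \<Rightarrow> 'a::real_inner"
  assumes "finite I" "\<forall>i\<in>I. \<forall>j\<in>I. inner (u i) (u j) = (if i=j then 1 else 0)"
  shows "(norm (\<Sum>i\<in>I. f i *\<^sub>R u i))^2 = (\<Sum>i\<in>I. (f i)^2)"
proof -
  have "(norm (\<Sum>i\<in>I. f i *\<^sub>R u i))^2 = (\<Sum>i\<in>I. \<Sum>j\<in>I. f i * f j * inner (u j) (u i))"
    unfolding power2_norm_eq_inner inner_sum_left inner_sum_right inner_scaleR_left inner_scaleR_right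
    by (intro sum.cong refl) (simp add: sum_distrib_left mult.assoc mult.left_commute)
  also have "\<dots> = (\<Sum>i\<in>I. \<Sum>j\<in>I. if i = j then f i * f j else 0)"
    using assms(2) by (intro sum.cong refl) auto
  also have "\<dots> = (\<Sum>i\<in>I. (f i)^2)"
    using assms(1) by (simp add: power2_eq_square)
  finally show ?thesis .
qed

lemma greedy_family:
  fixes U :: "nat set" and t :: nat
  assumes finU: "finite U"
  shows "\<exists>F. F \<subseteq> {S. S \<subseteq> U \<and> card S = 2*t} \<and> (\<forall>S\<in>F. \<forall>S'\<in>F. S \<noteq> S' \<longrightarrow> card (S \<inter> S') < t)
     \<and> card U choose (2*t) \<le> card F * (((2*t) choose t) * (card U choose t))"
proof -
  define A where "A = {S. S \<subseteq> U \<and> card S = 2*t}"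
  define Fams where "Fams = {F. F \<subseteq> A \<and> (\<forall>S\<in>F. \<forall>S'\<in>F. S \<noteq> S' \<longrightarrow> card (S \<inter> S') < t)}"
  have finA: "finite A" unfolding A_def using finU by auto
  have "Fams \<subseteq> Pow A" unfolding Fams_def by auto
  hence fin: "finite Fams" using finA by (meson finite_Pow_iff finite_subset)
  have ne: "{} \<in> Fams" unfolding Fams_def by auto
  define m where "m = Max (card ` Fams)"
  have "m \<in> card ` Fams" unfolding m_def using fin ne by (intro Max_in) auto
  then obtain F where F: "F \<in> Fams" "card F = m" by auto
  have maxF: "card G \<le> card F" if "G \<in> Fams" for G
    using F(2) fin that unfolding m_def by (auto intro: Max_ge)
  have FA: "F \<subseteq> A" using F(1) unfolding Fams_def by auto
  have finF: "finite F" using FA finA finite_subset by blast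
  define bad where "bad S' = {S. S \<subseteq> U \<and> card S = 2*t \<and> t \<le> card (S \<inter> S')}" for S'
  have cover: "A \<subseteq> (\<Union>S'\<in>F. bad S')"
  proof
    fix S assume S: "S \<in> A"
    show "S \<in> (\<Union>S'\<in>F. bad S')"
    proof (rule ccontr)
      assume nS: "S \<notin> (\<Union>S'\<in>F. bad S')"
      have SU: "S \<subseteq> U" "card S = 2*t" using S unfolding A_def by auto
      have lt: "card (S \<inter> S') < t" if "S' \<in> F" for S'
        using nS that SU unfolding bad_def by auto
      have "S \<notin> F" using lt[of S] SU by auto
      have lt2: "card (S' \<inter> S) < t" if "S' \<in> F" for S'
        using lt[OF that] by (simp add: Int_commute)
      have "insert S F \<in> Fams" using F(1) S lt lt2 unfolding Fams_def
        by (simp add: Ball_def)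
      hence "card (insert S F) \<le> card F" by (rule maxF)
      with \<open>S \<notin> F\<close> finF show False by simp
    qed
  qed
  have badle: "card (bad S') \<le> ((2*t) choose t) * (card U choose t)" if "S' \<in> F" for S'
  proof -
    have S': "S' \<subseteq> U" "card S' = 2*t" using that FA unfolding A_def by auto
    have finS': "finite S'" using S' finU finite_subset by blast
    define P where "P = {T. T \<subseteq> S' \<and> card T = t} \<times> {R. R \<subseteq> U \<and> card R = t}"
    have f1: "finite {T. T \<subseteq> S' \<and> card T = t}"
      by (rule finite_subset[of _ "Pow S'"]) (use finS' in auto)
    have f2: "finite {R. R \<subseteq> U \<and> card R = t}"
      by (rule finite_subset[of _ "Pow U"]) (use finU in auto)
    have finP: "finite P" unfolding P_def using f1 f2 by blast
    have sub: "bad S' \<subseteq> (\<lambda>(T,R). T \<union> R) ` P"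
    proof
      fix S assume "S \<in> bad S'"
      hence S: "S \<subseteq> U" "card S = 2*t" "t \<le> card (S \<inter> S')" unfolding bad_def by auto
      obtain T where T: "T \<subseteq> S \<inter> S'" "card T = t" "finite T"
        using obtain_subset_with_card_n[OF S(3)] by blast
      have finS: "finite S" using S finU finite_subset by blast
      have cR: "card (S - T) = t" using T S finS by (simp add: card_Diff_subset)
      have inP: "(T, S - T) \<in> P" unfolding P_def using T S cR by auto
      have eq: "S = (\<lambda>(T,R). T \<union> R) (T, S - T)" using T by auto
      show "S \<in> (\<lambda>(T,R). T \<union> R) ` P" using eq inP by (rule image_eqI)
    qed
    have "card (bad S') \<le> card ((\<lambda>(T,R). T \<union> R) ` P)"
      using sub by (rule card_mono[rotated]) (use finP in blast)
    also have "\<dots> \<le> card P" by (rule card_image_le[OF finP])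
    also have "card P = ((2*t) choose t) * (card U choose t)"
      unfolding P_def using n_subsets[OF finS'] n_subsets[OF finU] S'(2)
      by (simp add: card_cartesian_product)
    finally show ?thesis .
  qed
  have "card U choose (2*t) = card A" unfolding A_def using n_subsets[OF finU] by simp
  also have "\<dots> \<le> card (\<Union>S'\<in>F. bad S')"
    using cover
  proof (rule card_mono[rotated])
    have "(\<Union>S'\<in>F. bad S') \<subseteq> Pow U" unfolding bad_def by auto
    then show "finite (\<Union>S'\<in>F. bad S')" using finU by (meson finite_Pow_iff finite_subset)
  qed
  also have "\<dots> \<le> (\<Sum>S'\<in>F. card (bad S'))" by (rule card_UN_le[OF finF])
  also have "\<dots> \<le> card F * (((2*t) choose t) * (card U choose t))"
    using sum_bounded_above[of F "\<lambda>S'. card (bad S')"] badle by simp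
  finally have bnd: "card U choose (2*t) \<le> card F * (((2*t) choose t) * (card U choose t))" .
  have pw: "\<forall>S\<in>F. \<forall>S'\<in>F. S \<noteq> S' \<longrightarrow> card (S \<inter> S') < t" using F(1) unfolding Fams_def by blast
  show ?thesis by (intro exI[of _ F] conjI FA[unfolded A_def] pw bnd)
qed

lemma card_symdiff_ge:
  fixes S S' :: "nat set"
  assumes "finite S" "finite S'" "card S = 2*t" "card S' = 2*t" "card (S \<inter> S') < t"
  shows "2*t + 2 \<le> card ((S - S') \<union> (S' - S))"
proof -
  have "card ((S - S') \<union> (S' - S)) = card (S - S') + card (S' - S)"
    by (rule card_Un_disjoint) (use assms in auto)
  also have "card (S - S') = card S - card (S \<inter> S')" using assms by (simp add: card_Diff_subset_Int)
  also have "card (S' - S) = card S' - card (S' \<inter> S)" using assms by (simp add: card_Diff_subset_Int)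
  also have "card (S' \<inter> S) = card (S \<inter> S')" by (simp add: Int_commute)
  finally show ?thesis using assms by simp
qed

lemma D_lower:
  fixes e :: "nat \<Rightarrow> 'a::{real_inner, complete_space}"
    and \<epsilon> :: "nat \<Rightarrow> real" and n0 N t :: nat and B :: "'a set"
  assumes orth: "\<forall>m\<ge>1. \<forall>l\<ge>1. inner (e m) (e l) = (if m = l then 1 else 0)"
    and eps_pos: "\<forall>n. \<epsilon> n > 0"
    and cpt: "compact B"
    and contains: "\<forall>n\<ge>n0. \<forall>g\<in>cube_vertices e n. \<epsilon> n *\<^sub>R g \<in> B"
    and Nn0: "n0 \<le> N^2"
  shows "doubling_D (\<epsilon> (N^2) * sqrt (2*t+1)) B \<noteq> \<infinity> \<and>
     real (N choose (2*t)) \<le> real_of_ereal (doubling_D (\<epsilon> (N^2) * sqrt (2*t+1)) B) * (((2*t) choose t) * (N choose t))"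
proof -
  define n where "n = N^2"
  define x where "x = \<epsilon> n * sqrt (2*t+1)"
  have epos: "\<epsilon> n > 0" using eps_pos by auto
  have xpos: "x > 0" unfolding x_def using epos by auto
  have kn: "kn n = N" unfolding kn_def n_def by simp
  define u where "u j = e (2*(n+j))" for j
  have orth_u: "\<forall>i\<in>{1..N}. \<forall>j\<in>{1..N}. inner (u i) (u j) = (if i=j then 1 else 0)"
    unfolding u_def using orth by auto
  define ind where "ind S j = (if j \<in> S then 1 else (0::real))" for S :: "nat set" and j
  define v where "v S = \<epsilon> n *\<^sub>R (\<Sum>j\<in>{1..N}. ind S j *\<^sub>R u j)" for S
  have vB: "v S \<in> B" for S
  proof -
    have "(\<Sum>j\<in>{1..N}. ind S j *\<^sub>R u j) \<in> cube_vertices e n"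
      unfolding cube_vertices_def kn u_def
      by (rule CollectI, rule exI[of _ "ind S"]) (auto simp: ind_def)
    then show ?thesis using contains Nn0 unfolding v_def n_def by auto
  qed
  have dist2: "(dist (v S) (v S'))^2 = (\<epsilon> n)^2 * real (card ((S - S') \<union> (S' - S)))"
    if "S \<subseteq> {1..N}" "S' \<subseteq> {1..N}" for S S'
  proof -
    have "v S - v S' = \<epsilon> n *\<^sub>R (\<Sum>j\<in>{1..N}. (ind S j - ind S' j) *\<^sub>R u j)"
      unfolding v_def by (simp add: scaleR_diff_right sum_subtractf scaleR_left_diff_distrib)
    hence "(dist (v S) (v S'))^2 = (\<epsilon> n)^2 * (norm (\<Sum>j\<in>{1..N}. (ind S j - ind S' j) *\<^sub>R u j))^2"
      by (simp add: dist_norm power_mult_distrib)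
    also have "(norm (\<Sum>j\<in>{1..N}. (ind S j - ind S' j) *\<^sub>R u j))^2 = (\<Sum>j\<in>{1..N}. (ind S j - ind S' j)^2)"
      by (rule norm_sum_orth[OF _ orth_u]) simp
    also have "\<dots> = (\<Sum>j\<in>{1..N}. if j \<in> (S - S') \<union> (S' - S) then 1 else 0)"
      by (intro sum.cong refl) (auto simp: ind_def)
    also have "\<dots> = real (card {j\<in>{1..N}. j \<in> (S - S') \<union> (S' - S)})"
      by (simp add: sum.inter_filter[symmetric])
    also have "{j\<in>{1..N}. j \<in> (S - S') \<union> (S' - S)} = (S - S') \<union> (S' - S)" using that by auto
    finally show ?thesis .
  qed
  obtain F where F: "F \<subseteq> {S. S \<subseteq> {1..N} \<and> card S = 2*t}"
      "\<forall>S\<in>F. \<forall>S'\<in>F. S \<noteq> S' \<longrightarrow> card (S \<inter> S') < t"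
      "card {1..N} choose (2*t) \<le> card F * (((2*t) choose t) * (card {1..N} choose t))"
    using greedy_family[of "{1..N}" t] by auto
  have Ffin: "finite F"
    by (rule finite_subset[OF F(1)], rule finite_subset[of _ "Pow {1..N}"]) auto
  have inball: "v S \<in> ball (v {}) x \<inter> B" if "S \<in> F" for S
  proof -
    have S: "S \<subseteq> {1..N}" "card S = 2*t" using that F(1) by auto
    have "(dist (v {}) (v S))^2 = (\<epsilon> n)^2 * (2*t)" using dist2[of "{}" S] S by simp
    also have "\<dots> < x^2" unfolding x_def using epos by (simp add: power_mult_distrib)
    finally have "dist (v {}) (v S) < x" using xpos by (smt (verit) power_mono zero_le_dist)
    then show ?thesis using vB by auto
  qed
  have far: "x < dist (v S) (v S')" if "S \<in> F" "S' \<in> F" "S \<noteq> S'" for S S'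
  proof -
    have S: "S \<subseteq> {1..N}" "card S = 2*t" "S' \<subseteq> {1..N}" "card S' = 2*t" using that F(1) by auto
    have fS: "finite S" "finite S'" using S finite_subset by (metis finite_atLeastAtMost)+
    have c: "2*t+2 \<le> card ((S - S') \<union> (S' - S))"
      by (rule card_symdiff_ge[OF fS S(2) S(4)]) (use F(2) that in auto)
    have "x^2 = (\<epsilon> n)^2 * (2*t+1)" unfolding x_def by (simp add: power_mult_distrib)
    also have "\<dots> < (\<epsilon> n)^2 * real (card ((S - S') \<union> (S' - S)))"
      using c epos by (intro mult_strict_left_mono) auto
    also have "\<dots> = (dist (v S) (v S'))^2" using dist2 S by simp
    finally show ?thesis using xpos by (smt (verit) power_mono zero_le_dist)
  qed
  have cov_ge: "ereal (real (card F)) \<le> cov_num (x/2) (ball (v {}) x \<inter> B) B"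
    unfolding cov_num_def
  proof (rule Inf_greatest, clarify)
    fix C assume C: "finite C" "C \<subseteq> B" "ball (v {}) x \<inter> B \<subseteq> (\<Union>c\<in>C. ball c (x/2) \<inter> B)"
    have "\<forall>S\<in>F. \<exists>c. c \<in> C \<and> dist c (v S) < x/2" using C(3) inball by fastforce
    then obtain h where h: "\<forall>S\<in>F. h S \<in> C \<and> dist (h S) (v S) < x/2" by metis
    have "inj_on h F"
    proof (rule inj_onI, rule ccontr)
      fix S S' assume SS: "S \<in> F" "S' \<in> F" "h S = h S'" "S \<noteq> S'"
      have "dist (v S) (v S') \<le> dist (h S) (v S) + dist (h S) (v S')" by (rule dist_triangle3)
      also have "\<dots> < x"
      proof -
        have a: "dist (h S) (v S) < x/2" using h SS(1) by blast
        have b: "dist (h S') (v S') < x/2" using h SS(2) by blast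
        show ?thesis using a b SS(3) by simp
      qed
      finally show False using far[OF SS(1,2,4)] by simp
    qed
    hence "card F \<le> card C" using h C(1) by (intro card_inj_on_le) auto
    then show "ereal (real (card F)) \<le> ereal (real (card C))" by simp
  qed
  have D_ge: "cov_num (x/2) (ball (v {}) x \<inter> B) B \<le> doubling_D x B"
    unfolding doubling_D_def using vB by (intro SUP_upper) auto
  obtain C0 where C0: "finite C0" "C0 \<subseteq> B" "B \<subseteq> (\<Union>c\<in>C0. ball c (x/2))"
    using seq_compact_imp_totally_bounded[OF compact_imp_seq_compact[OF cpt]] xpos
    by (meson half_gt_zero)
  have D_le: "doubling_D x B \<le> ereal (real (card C0))"
    unfolding doubling_D_def
  proof (rule SUP_least)
    fix y assume "y \<in> B"
    show "cov_num (x/2) (ball y x \<inter> B) B \<le> ereal (real (card C0))"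
      unfolding cov_num_def using C0 by (intro Inf_lower) blast
  qed
  have Dfin: "doubling_D x B \<noteq> \<infinity>" using D_le by auto
  have "ereal (real (card F)) \<le> doubling_D x B" using cov_ge D_ge by (rule order_trans)
  hence cF: "real (card F) \<le> real_of_ereal (doubling_D x B)"
    using Dfin by (cases "doubling_D x B") auto
  have "real (N choose (2*t)) \<le> real (card F) * (((2*t) choose t) * (N choose t))"
    using F(3) by (simp flip: of_nat_mult)
  also have "\<dots> \<le> real_of_ereal (doubling_D x B) * (((2*t) choose t) * (N choose t))"
    using cF by (intro mult_right_mono) auto
  finally show ?thesis using Dfin unfolding x_def n_def by simp
qed

lemma binom_bound:
  fixes N t :: nat and Dr :: real
  assumes t1: "1 \<le> t" and Nt: "2*t \<le> N"
    and h: "real (N choose (2*t)) \<le> Dr * (((2*t) choose t) * (N choose t))"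
  shows "Dr > 0 \<and> t * ln N - (t * ln (2*t) + 2 * ln ((2*t) choose t)) \<le> ln Dr"
proof -
  define C2 where "C2 = real ((2*t) choose t)"
  have C2pos: "C2 \<ge> 1" unfolding C2_def by (simp add: Suc_leI)
  have cm: "(N choose (2*t)) * ((2*t) choose t) = (N choose t) * ((N - t) choose t)"
    using choose_mult[of t "2*t" N] Nt by simp
  have cNt: "real (N choose t) > 0" using Nt by simp
  have "real (N choose t) * real ((N - t) choose t) = real (N choose (2*t)) * C2"
    unfolding C2_def by (simp flip: of_nat_mult add: cm)
  also have "\<dots> \<le> Dr * (C2 * real (N choose t)) * C2"
    using h C2pos unfolding C2_def by (intro mult_right_mono) auto
  finally have "real (N choose t) * real ((N - t) choose t) \<le> real (N choose t) * (Dr * C2^2)"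
    by (simp add: power2_eq_square algebra_simps)
  hence b1: "real ((N - t) choose t) \<le> Dr * C2^2" using cNt by simp
  have b2: "(real (N - t) / real t) ^ t \<le> real ((N - t) choose t)"
    by (rule binomial_ge_n_over_k_pow_k) (use Nt in simp)
  have tpos: "real t > 0" using t1 by simp
  have Npos: "real N > 0" using Nt t1 by simp
  have b3: "real N / (2 * real t) \<le> real (N - t) / real t"
    using Nt tpos by (simp add: divide_simps of_nat_diff)
  have b4: "(real N / (2 * real t)) ^ t \<le> Dr * C2^2"
    using b1 b2 power_mono[OF b3, of t] tpos Npos by (smt (verit) divide_nonneg_nonneg zero_le_numeral mult_nonneg_nonneg of_nat_0_le_iff)
  have pos: "(real N / (2 * real t)) ^ t > 0" using tpos Npos by simp
  hence Drpos: "Dr > 0" using b4 C2pos by (smt (verit) mult_nonpos_nonneg zero_le_power2)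
  have "ln ((real N / (2 * real t)) ^ t) \<le> ln (Dr * C2^2)"
    using b4 pos by (subst ln_le_cancel_iff) auto
  hence "t * (ln N - ln (2*t)) \<le> ln Dr + 2 * ln C2"
    using pos Drpos C2pos tpos Npos by (simp add: ln_mult ln_div ln_realpow)
  then show ?thesis using Drpos unfolding C2_def by (simp add: algebra_simps)
qed

theorem lemma3p4:
  fixes e :: "nat \<Rightarrow> 'a::{real_inner, complete_space}"
    and \<epsilon> :: "nat \<Rightarrow> real" and \<gamma> c C :: real and n0 :: nat
    and B :: "'a set"
  assumes orth: "\<forall>m\<ge>1. \<forall>l\<ge>1. inner (e m) (e l) = (if m = l then 1 else 0)"
    and gamma: "\<gamma> > 0"
    and cC: "0 < c" "c \<le> C"
    and eps_pos: "\<forall>n. \<epsilon> n > 0"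
    and eps_bounds: "\<forall>n. c * exp (- \<gamma> * real n ^ 2) \<le> \<epsilon> n \<and> \<epsilon> n \<le> C * exp (- \<gamma> * real n ^ 2)"
    and cpt: "compact B"
    and contains: "\<forall>n\<ge>n0. \<forall>g\<in>cube_vertices e n. \<epsilon> n *\<^sub>R g \<in> B"
  shows "dim_LogD B = \<infinity>"
proof -
  define f where "f y = ereal (ln (real_of_ereal (doubling_D y B)) / ln (ln (1 / y)))" for y
  have key: "\<exists>y. 0 < y \<and> y < d \<and> ereal L \<le> f y" if L0: "L \<ge> 0" and d0: "d > 0" for L d
  proof -
    define t where "t = nat \<lceil>5*L\<rceil> + 1"
    have t1: "t \<ge> 1" unfolding t_def by simp
    have tL: "real t \<ge> 5*L + 1" unfolding t_def using L0
      by (smt (verit) of_nat_1 of_nat_add real_nat_ceiling_ge)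
    define K where "K = t * ln (2*t) + 2 * ln ((2*t) choose t)"
    define a where "a = \<bar>ln c\<bar>"
    define s where "s = sqrt (2*t+1)"
    have s1: "s \<ge> 1" unfolding s_def by simp
    define dd where "dd = min d (1/3)"
    have ddpos: "dd > 0" unfolding dd_def using d0 by simp
    define M where "M = max (max (real n0) (2*t+1)) (max (\<gamma> + a) (max (exp K) (ln (C * s / dd)/\<gamma>)))"
    define N where "N = nat \<lceil>M\<rceil> + 1"
    have NM: "real N > M" unfolding N_def by (smt (verit) of_nat_1 of_nat_add real_nat_ceiling_ge)
    have N1: "real N \<ge> 1" "real N \<ge> 2*t+1" "real N \<ge> real n0" "real N \<ge> \<gamma> + a" "real N \<ge> exp K"
        "real N > ln (C * s / dd)/\<gamma>"
      using NM unfolding M_def by auto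
    have Nn0: "n0 \<le> N^2" using N1(3) by (metis of_nat_le_iff le_trans power2_nat_le_imp_le le_refl nat_le_linear)
    have Nt: "2*t \<le> N" using N1(2) by linarith
    define x where "x = \<epsilon> (N^2) * s"
    have DL: "doubling_D x B \<noteq> \<infinity>"
       "real (N choose (2*t)) \<le> real_of_ereal (doubling_D x B) * (((2*t) choose t) * (N choose t))"
      using D_lower[OF orth eps_pos cpt contains Nn0, of t] unfolding x_def s_def by auto
    define Dr where "Dr = real_of_ereal (doubling_D x B)"
    have BB: "Dr > 0" "t * ln N - K \<le> ln Dr"
      using binom_bound[OF t1 Nt DL(2)[folded Dr_def]] unfolding K_def by auto
    have Npos: "real N > 0" using N1 by simp
    have N4: "real (N^2) ^ 2 = real N ^ 4" by simp
    have xpos: "x > 0" unfolding x_def using eps_pos s1 by (smt (verit) mult_pos_pos)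
    have N4ge: "real N ^ 4 \<ge> real N" using N1(1)
      by (metis power_increasing[of 1 4 "real N"] power_one_right le_numeral_extra(4) one_le_numeral)
    have "x \<le> C * exp (- \<gamma> * real N ^ 4) * s"
    proof -
      have "\<epsilon> (N^2) \<le> C * exp (- \<gamma> * real (N^2) ^ 2)" using eps_bounds by blast
      hence "\<epsilon> (N^2) \<le> C * exp (- \<gamma> * real N ^ 4)" by (simp only: N4)
      thus ?thesis unfolding x_def using s1 by (intro mult_right_mono) auto
    qed
    also have "\<dots> \<le> C * exp (- \<gamma> * real N) * s"
      using cC s1 gamma N4ge by (intro mult_right_mono mult_left_mono) auto
    also have "\<dots> < dd"
    proof -
      have "\<gamma> * real N > ln (C * s / dd)" using N1(6) gamma by (simp add: field_simps)
      hence "exp (ln (C * s / dd)) < exp (\<gamma> * real N)" by (rule exp_less_mono)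
      moreover have "C * s / dd > 0" using cC s1 ddpos by simp
      ultimately have "exp (\<gamma> * real N) > C * s / dd" by simp
      hence "C * s < dd * exp (\<gamma> * real N)" using ddpos by (simp add: field_simps)
      thus ?thesis by (simp add: exp_minus field_simps)
    qed
    finally have xd: "x < dd" .
    have lx: "ln (1/x) > 1"
    proof -
      have "1/x > 3" using xd xpos unfolding dd_def by (simp add: field_simps)
      hence "exp 1 < 1/x" using exp_le by linarith
      hence "ln (exp 1) < ln (1/x)" using xpos by (subst ln_less_cancel_iff) auto
      thus ?thesis by simp
    qed
    have lnln_pos: "ln (ln (1/x)) > 0" using lx by simp
    have xlow: "x \<ge> c * exp (- \<gamma> * real N ^ 4)"
    proof -
      have "c * exp (- \<gamma> * real N ^ 4) \<le> \<epsilon> (N^2)" using eps_bounds N4 by metis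
      also have "\<dots> \<le> \<epsilon> (N^2) * s" using eps_pos[rule_format, of "N^2"] s1 by (simp add: mult_le_cancel_left1)
      finally show ?thesis unfolding x_def .
    qed
    have up1: "ln (1/x) \<le> \<gamma> * real N ^ 4 + a"
    proof -
      have "ln (c * exp (- \<gamma> * real N ^ 4)) \<le> ln x" using xlow cC(1) xpos by (subst ln_le_cancel_iff) auto
      hence "ln c - \<gamma> * real N ^ 4 \<le> ln x" using cC(1) by (simp add: ln_mult)
      moreover have "ln (1/x) = - ln x" using xpos by (simp add: ln_div)
      moreover have "- ln c \<le> a" unfolding a_def by simp
      ultimately show ?thesis by linarith
    qed
    have up2: "\<gamma> * real N ^ 4 + a \<le> real N ^ 5"
    proof -
      have a0: "a \<ge> 0" unfolding a_def by simp
      have "real N ^ 4 \<ge> 1" using N1(1) by simp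
      hence "a \<le> a * real N ^ 4" using a0 by (simp add: mult_le_cancel_left1)
      hence "\<gamma> * real N ^ 4 + a \<le> (\<gamma> + a) * real N ^ 4" by (simp add: algebra_simps)
      also have "\<dots> \<le> real N * real N ^ 4" using N1(4) by (intro mult_right_mono) auto
      also have "\<dots> = real N ^ 5" by (simp add: power_Suc[symmetric] del: power_Suc)
      finally show ?thesis .
    qed
    have "ln (ln (1/x)) \<le> ln (real N ^ 5)"
      using up1 up2 lx Npos by (subst ln_le_cancel_iff) auto
    hence lnln_le: "ln (ln (1/x)) \<le> 5 * ln (real N)" using Npos by (simp add: ln_realpow)
    have lnN0: "ln (real N) \<ge> 0" using N1(1) by simp
    have lnNK: "ln (real N) \<ge> K" using N1(5) Npos by (metis exp_le_cancel_iff exp_ln)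
    have "5 * L * ln (real N) \<le> ln Dr"
    proof -
      have "(5*L+1) * ln (real N) \<le> real t * ln (real N)" using tL lnN0 by (intro mult_right_mono) auto
      thus ?thesis using BB(2) lnNK by (simp add: algebra_simps)
    qed
    moreover have "L * ln (ln (1/x)) \<le> 5 * L * ln (real N)" using mult_left_mono[OF lnln_le L0]
      by (simp add: algebra_simps)
    ultimately have "L * ln (ln (1/x)) \<le> ln Dr" by linarith
    hence "L \<le> ln Dr / ln (ln (1/x))" using lnln_pos by (simp add: pos_le_divide_eq)
    hence "ereal L \<le> f x" unfolding f_def Dr_def by simp
    moreover have "x < d" using xd unfolding dd_def by simp
    ultimately show ?thesis using xpos by blast
  qed
  show ?thesis unfolding dim_LogD_def f_def[symmetric]
  proof (rule ereal_top)
    fix L0 :: real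
    define L where "L = max L0 0"
    show "ereal L0 \<le> Limsup (at_right 0) f"
      unfolding Limsup_def
    proof (rule INF_greatest)
      fix P assume "P \<in> {P. eventually P (at_right (0::real))}"
      then obtain b where b: "b > 0" "\<forall>y>0. y < b \<longrightarrow> P y"
        by (auto simp: eventually_at_right_field)
      obtain y where y: "0 < y" "y < b" "ereal L \<le> f y" using key[of L b] b(1) unfolding L_def by auto
      have "ereal L0 \<le> f y" using y(3) unfolding L_def by (metis ereal_less_eq(3) max.cobounded1 order_trans)
      then show "ereal L0 \<le> (SUP x\<in>Collect P. f x)"
        using y b by (intro SUP_upper2[of y]) auto
    qed
  qed
qed

end
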